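(* Let $\mathcal{A}*\mathcal{X}=\mathcal{B}$ be a consistent tensor system with unique solution $\mathcal{X}^*$, where $\mathcal{A}\in\mathbb{R}^{n_1\times n_2\times n}$ and $\mathcal{B}\in\mathbb{R}^{n_1\times n_3\times n}$. Let $\alpha>0$ and $$\kappa=\max_{i=1,\dots,n}\|\mathcal{I}-\alpha\tilde{\mathcal{A}}_i^T*\tilde{\mathcal{A}}_i\|_{op},\qquad \mu=\max_{i,j\in\{1,\dots,n\},\,i\neq j}\|\tilde{\mathcal{A}}_i^T*\tilde{\mathcal{A}}_j\|_{op}.$$ If $\kappa+\alpha\mu(n-1)<1$, then the iterates $\mathcal{X}(t)$ of cyclic frontal slice descent (block size $1$) with learning rate $\alpha$ satisfy $\mathcal{E}(t)=\|\mathcal{X}(t)-\mathcal{X}^*\|_F^2\to 0$ as $t\to\infty$.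
   Context: For $\mathcal{A}\in\mathbb{R}^{n_1\times n_2\times n}$ with frontal slices $A_k=\mathcal{A}(:,:,k)$: $\mathrm{unfold}(\mathcal{A})$ stacks $A_1,\dots,A_n$ vertically, $\mathrm{fold}$ is its inverse, $\mathrm{bcirc}(\mathcal{A})$ is the $n_1n\times n_2n$ block-circulant matrix with $(p,q)$ block $A_{((p-q)\bmod n)+1}$, and the t-product is $\mathcal{A}*\mathcal{X}=\mathrm{fold}(\mathrm{bcirc}(\mathcal{A})\mathrm{unfold}(\mathcal{X}))$. The identity tensor $\mathcal{I}$ has first frontal slice equal to the identity matrix and all other frontal slices zero. The transpose $\mathcal{A}^T$ transposes each frontal slice and reverses the order of slices $2,\dots,n$. $\|\cdot\|_F$ is the entrywise Frobenius norm and $\|\mathcal{C}\|_{op}=\sup_{\|\mathcal{X}\|_F=1}\|\mathcal{C}*\mathcal{X}\|_F=\|\mathrm{bcirc}(\mathcal{C})\|_2$. For $k\in\{1,\dots,n\}$, $\tilde{\mathcal{A}}_k\in\mathbb{R}^{n_1\times n_2\times n}$ has $k$-th frontal slice $A_k$ and all other frontal slices zero. Cyclic frontal slice descent with learning rate $\alpha$: set $\mathcal{X}(t)=0$ for all $t\le 0$; for $t=0,1,2,\dots$ let $\mathcal{R}(t+1)=\mathcal{B}-\sum_{j=0}^{n-1}\tilde{\mathcal{A}}_{((t-j)\bmod n)+1}*\mathcal{X}(t-j)$ and $\mathcal{X}(t+1)=\mathcal{X}(t)+\alpha\,\tilde{\mathcal{A}}_{(t\bmod n)+1}^T*\mathcal{R}(t+1)$.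 *)

theory Defs
  imports Complex_Main
begin

text \<open>Third-order real tensors are represented as functions T i j k (0-based
row i, column j, frontal slice k). A tensor of size d1 x d2 x d3 is such a
function, of which only the entries with i < d1, j < d2, k < d3 matter; all
operations below only read entries inside these bounds.\<close>

type_synonym tensor = "nat \<Rightarrow> nat \<Rightarrow> nat \<Rightarrow> real"

definition tzero :: tensor where
  "tzero = (\<lambda>i j k. 0)"

definition tadd :: "tensor \<Rightarrow> tensor \<Rightarrow> tensor" where
  "tadd X Y = (\<lambda>i j k. X i j k + Y i j k)"

definition tsub :: "tensor \<Rightarrow> tensor \<Rightarrow> tensor" where
  "tsub X Y = (\<lambda>i j k. X i j k - Y i j k)"

definition tscale :: "real \<Rightarrow> tensor \<Rightarrow> tensor" where
  "tscale c X = (\<lambda>i j k. c * X i j k)"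

text \<open>t-product fold(bcirc(A) unfold(X)) for A of size d1 x m x n and X of size
m x d3 x n: the p-th frontal slice (0-based) is sum over q of A_{(p-q) mod n} X_q.\<close>
definition tprod :: "nat \<Rightarrow> nat \<Rightarrow> tensor \<Rightarrow> tensor \<Rightarrow> tensor" where
  "tprod m n A X = (\<lambda>i j p. \<Sum>q<n. \<Sum>r<m. A i r ((p + n - q) mod n) * X r j q)"

text \<open>Transpose: transpose each frontal slice, reverse slices 2..n (1-based).\<close>
definition ttrans :: "nat \<Rightarrow> tensor \<Rightarrow> tensor" where
  "ttrans n A = (\<lambda>i j k. A j i ((n - k) mod n))"

definition tident :: tensor where
  "tident = (\<lambda>i j k. if i = j \<and> k = 0 then 1 else 0)"

text \<open>The tensor keeping only frontal slice k (0-based), i.e. \<tilde>A_{k+1}.\<close>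
definition tslice :: "tensor \<Rightarrow> nat \<Rightarrow> tensor" where
  "tslice A k = (\<lambda>i j l. if l = k then A i j l else 0)"

definition frob :: "nat \<Rightarrow> nat \<Rightarrow> nat \<Rightarrow> tensor \<Rightarrow> real" where
  "frob d1 d2 d3 T = sqrt (\<Sum>i<d1. \<Sum>j<d2. \<Sum>k<d3. (T i j k)\<^sup>2)"

definition teq :: "nat \<Rightarrow> nat \<Rightarrow> nat \<Rightarrow> tensor \<Rightarrow> tensor \<Rightarrow> bool" where
  "teq d1 d2 d3 X Y = (\<forall>i<d1. \<forall>j<d2. \<forall>k<d3. X i j k = Y i j k)"

text \<open>Operator norm of C of size p x m x n: sup of frob(C * X) over X of size
m x 1 x n with frob X = 1; this is exactly the spectral norm of bcirc(C).\<close>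
definition topnorm :: "nat \<Rightarrow> nat \<Rightarrow> nat \<Rightarrow> tensor \<Rightarrow> real" where
  "topnorm p m n C = Sup {frob p 1 n (tprod m n C X) | X. frob m 1 n X = 1}"

end

theory Submission
  imports Defs "HOL-Analysis.L2_Norm"
begin


lemma frob_L2: "frob d1 d2 d3 T = L2_set (\<lambda>(i,j,k). T i j k) ({..<d1} \<times> {..<d2} \<times> {..<d3})"
  unfolding frob_def L2_set_def
  by (simp add: sum.cartesian_product case_prod_beta)

lemma frob_nonneg: "0 \<le> frob d1 d2 d3 T"
  unfolding frob_def by (intro real_sqrt_ge_zero sum_nonneg) auto

lemma frob_cong: "(\<And>i j k. i < d1 \<Longrightarrow> j < d2 \<Longrightarrow> k < d3 \<Longrightarrow> S i j k = T i j k) \<Longrightarrow> frob d1 d2 d3 S = frob d1 d2 d3 T"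
  unfolding frob_def by (intro arg_cong[where f=sqrt] sum.cong) auto

lemma frob_add: "frob d1 d2 d3 (\<lambda>i j k. S i j k + T i j k) \<le> frob d1 d2 d3 S + frob d1 d2 d3 T"
  unfolding frob_L2 using L2_set_triangle_ineq[of "\<lambda>(i,j,k). S i j k" "\<lambda>(i,j,k). T i j k"]
  by (simp add: case_prod_beta split_def)

lemma frob_scale: "frob d1 d2 d3 (\<lambda>i j k. c * T i j k) = \<bar>c\<bar> * frob d1 d2 d3 T"
  unfolding frob_L2 using L2_set_right_distrib[of "\<bar>c\<bar>" "\<lambda>(i,j,k). T i j k"]
  by (simp add: case_prod_beta abs_mult L2_set_def power_mult_distrib)

lemma frob_neg: "frob d1 d2 d3 (\<lambda>i j k. - T i j k) = frob d1 d2 d3 T"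
  using frob_scale[of d1 d2 d3 "-1" T] by simp

lemma frob_sub: "frob d1 d2 d3 (\<lambda>i j k. S i j k - T i j k) \<le> frob d1 d2 d3 S + frob d1 d2 d3 T"
  using frob_add[of d1 d2 d3 S "\<lambda>i j k. - T i j k"] frob_neg[of d1 d2 d3 T] by simp

lemma frob_sum: "finite L \<Longrightarrow> frob d1 d2 d3 (\<lambda>i j k. \<Sum>l\<in>L. F l i j k) \<le> (\<Sum>l\<in>L. frob d1 d2 d3 (F l))"
proof (induction L rule: finite_induct)
  case empty
  then show ?case by (simp add: frob_def)
next
  case (insert x F')
  have "frob d1 d2 d3 (\<lambda>i j k. \<Sum>l\<in>insert x F'. F l i j k) = frob d1 d2 d3 (\<lambda>i j k. F x i j k + (\<Sum>l\<in>F'. F l i j k))"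
    using insert by simp
  also have "\<dots> \<le> frob d1 d2 d3 (F x) + frob d1 d2 d3 (\<lambda>i j k. \<Sum>l\<in>F'. F l i j k)"
    by (rule frob_add)
  also have "\<dots> \<le> frob d1 d2 d3 (F x) + (\<Sum>l\<in>F'. frob d1 d2 d3 (F l))" using insert by simp
  finally show ?case using insert by simp
qed

lemma entry_le_frob: "i < d1 \<Longrightarrow> j < d2 \<Longrightarrow> k < d3 \<Longrightarrow> \<bar>T i j k\<bar> \<le> frob d1 d2 d3 T"
  unfolding frob_L2 using member_le_L2_set[of "{..<d1} \<times> {..<d2} \<times> {..<d3}" "(i,j,k)" "\<lambda>x. \<bar>case x of (i,j,k) \<Rightarrow> T i j k\<bar>"]
  by (simp add: L2_set_def)



lemma H1: "(int (a mod n) + c) mod int n = (int a + c) mod int n"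
  by (metis mod_add_left_eq zmod_int)
lemma H2: "(c - int (a mod n)) mod int n = (c - int a) mod int n"
  by (metis mod_diff_right_eq zmod_int)

lemma mod_back: "(u::nat) < n \<Longrightarrow> q' < n \<Longrightarrow> ((u + q') mod n + n - q') mod n = u"
proof -
  assume a: "u < n" "q' < n"
  have "int (((u + q') mod n + n - q') mod n) = (int ((u + q') mod n) + (int n - int q')) mod int n"
    using a by (simp add: of_nat_diff zmod_int add_diff_eq)
  also have "\<dots> = (int (u + q') + (int n - int q')) mod int n"
    by (rule H1)
  also have "\<dots> = (int u + int n) mod int n" by simp
  also have "\<dots> = int u" using a by simp
  finally show ?thesis by simp
qed

lemma mod_shift2: "(u::nat) < n \<Longrightarrow> q' < n \<Longrightarrow> (p + n - (u + q') mod n) mod n = ((p + n - q') mod n + n - u) mod n"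
proof -
  assume a: "u < n" "q' < n"
  have le: "(u + q') mod n \<le> p + n" proof -
    have "(u + q') mod n < n" using a by simp
    then show ?thesis by linarith
  qed
  have "int ((p + n - (u + q') mod n) mod n) = int (p + n - (u + q') mod n) mod int n"
    by (simp only: zmod_int)
  also have "\<dots> = ((int p + int n) - int ((u + q') mod n)) mod int n"
    using le by (simp only: of_nat_diff of_nat_add)
  also have "\<dots> = ((int p + int n) - int (u + q')) mod int n"
    by (rule H2)
  also have "\<dots> = (int (p + n - q') + (int n - int u) - int n) mod int n"
    using a by (simp add: of_nat_diff algebra_simps)
  also have "\<dots> = (int (p + n - q') + (int n - int u)) mod int n"
    by (metis add.commute add_diff_eq diff_add_cancel mod_add_self1)
  also have "\<dots> = (int ((p + n - q') mod n) + (int n - int u)) mod int n"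
    by (rule H1[symmetric])
  also have "\<dots> = int (((p + n - q') mod n + n - u) mod n)"
    using a by (simp add: of_nat_diff zmod_int add_diff_eq)
  finally show ?thesis by simp
qed

lemma mod_fwd: "(q::nat) < n \<Longrightarrow> q' < n \<Longrightarrow> ((q + n - q') mod n + q') mod n = q"
proof -
  assume a: "q < n" "q' < n"
  have "int (((q + n - q') mod n + q') mod n) = (int ((q + n - q') mod n) + int q') mod int n"
    using a by (simp add: zmod_int)
  also have "\<dots> = (int (q + n - q') + int q') mod int n"
    by (rule H1)
  also have "\<dots> = (int q + int n) mod int n" using a by (simp add: of_nat_diff)
  also have "\<dots> = int q" using a by simp
  finally show ?thesis by simp
qed

lemma bij_shift: "(q'::nat) < n \<Longrightarrow> bij_betw (\<lambda>u. (u + q') mod n) {..<n} {..<n}"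
  by (rule bij_betw_byWitness[where f'="\<lambda>q. (q + n - q') mod n"]) (auto simp: mod_back mod_fwd)


lemma shift_sum: "(q'::nat) < n \<Longrightarrow> (\<Sum>q<n. f ((p+n-q) mod n) * g ((q+n-q') mod n)) = (\<Sum>u<n. f (((p+n-q') mod n + n - u) mod n) * g u)"
proof -
  assume a: "q' < n"
  have "(\<Sum>q<n. f ((p+n-q) mod n) * g ((q+n-q') mod n)) = (\<Sum>u<n. f ((p+n-(u + q') mod n) mod n) * g (((u + q') mod n+n-q') mod n))"
    using sum.reindex_bij_betw[OF bij_shift[OF a], of "\<lambda>q. f ((p+n-q) mod n) * g ((q+n-q') mod n)"] by simp
  also have "\<dots> = (\<Sum>u<n. f (((p+n-q') mod n + n - u) mod n) * g u)"
    using a by (intro sum.cong) (auto simp: mod_back mod_shift2)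
  finally show ?thesis .
qed

lemma swap4: "(\<Sum>a\<in>A. \<Sum>b\<in>B. \<Sum>c\<in>C. \<Sum>d\<in>D. F a b c d) = (\<Sum>c\<in>C. \<Sum>d\<in>D. \<Sum>b\<in>B. \<Sum>a\<in>A. F a b c d)"
proof -
  have "(\<Sum>a\<in>A. \<Sum>b\<in>B. \<Sum>c\<in>C. \<Sum>d\<in>D. F a b c d) = (\<Sum>b\<in>B. \<Sum>a\<in>A. \<Sum>c\<in>C. \<Sum>d\<in>D. F a b c d)"
    by (rule sum.swap)
  also have "\<dots> = (\<Sum>b\<in>B. \<Sum>c\<in>C. \<Sum>a\<in>A. \<Sum>d\<in>D. F a b c d)"
    by (rule sum.cong[OF refl], rule sum.swap)
  also have "\<dots> = (\<Sum>b\<in>B. \<Sum>c\<in>C. \<Sum>d\<in>D. \<Sum>a\<in>A. F a b c d)"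
    by (rule sum.cong[OF refl], rule sum.cong[OF refl], rule sum.swap)
  also have "\<dots> = (\<Sum>c\<in>C. \<Sum>b\<in>B. \<Sum>d\<in>D. \<Sum>a\<in>A. F a b c d)"
    by (rule sum.swap)
  also have "\<dots> = (\<Sum>c\<in>C. \<Sum>d\<in>D. \<Sum>b\<in>B. \<Sum>a\<in>A. F a b c d)"
    by (rule sum.cong[OF refl], rule sum.swap)
  finally show ?thesis .
qed

lemma tprod_assoc: "tprod k n C (tprod m n D E) = tprod m n (tprod k n C D) E"
proof (intro ext)
  fix i j p
  have "tprod k n C (tprod m n D E) i j p = (\<Sum>q<n. \<Sum>r<k. \<Sum>q'<n. \<Sum>r'<m. C i r ((p + n - q) mod n) * D r r' ((q + n - q') mod n) * E r' j q')"
    unfolding tprod_def by (simp add: sum_distrib_left mult.assoc)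
  also have "\<dots> = (\<Sum>q'<n. \<Sum>r'<m. \<Sum>r<k. \<Sum>q<n. C i r ((p + n - q) mod n) * D r r' ((q + n - q') mod n) * E r' j q')"
    by (rule swap4)
  also have "\<dots> = (\<Sum>q'<n. \<Sum>r'<m. (\<Sum>r<k. \<Sum>q<n. C i r ((p + n - q) mod n) * D r r' ((q + n - q') mod n)) * E r' j q')"
    by (simp add: sum_distrib_right)
  also have "\<dots> = (\<Sum>q'<n. \<Sum>r'<m. (\<Sum>r<k. \<Sum>u<n. C i r (((p + n - q') mod n + n - u) mod n) * D r r' u) * E r' j q')"
    by (rule sum.cong[OF refl], rule sum.cong[OF refl], rule arg_cong2[where f="(*)"], rule sum.cong[OF refl], rule shift_sum, auto)
  also have "\<dots> = (\<Sum>q'<n. \<Sum>r'<m. (\<Sum>u<n. \<Sum>r<k. C i r (((p + n - q') mod n + n - u) mod n) * D r r' u) * E r' j q')"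
    by (rule sum.cong[OF refl], rule sum.cong[OF refl], rule arg_cong2[where f="(*)"], rule sum.swap, rule refl)
  also have "\<dots> = tprod m n (tprod k n C D) E i j p"
    unfolding tprod_def by (rule refl)
  finally show "tprod k n C (tprod m n D E) i j p = tprod m n (tprod k n C D) E i j p" .
qed

lemma tprod_sum_right: "tprod m n C (\<lambda>i j k. \<Sum>l\<in>L. F l i j k) = (\<lambda>i j k. \<Sum>l\<in>L. tprod m n C (F l) i j k)"
  unfolding tprod_def by (intro ext) (simp add: sum_distrib_left sum.swap[of _ L])

lemma tprod_sub_right: "tprod m n C (tsub X Y) = tsub (tprod m n C X) (tprod m n C Y)"
  unfolding tprod_def tsub_def by (intro ext) (simp add: algebra_simps sum_subtractf)

lemma tprod_sub_left: "tprod m n (tsub C D) X = tsub (tprod m n C X) (tprod m n D X)"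
  unfolding tprod_def tsub_def by (intro ext) (simp add: algebra_simps sum_subtractf)

lemma tprod_scale_left: "tprod m n (tscale c C) X = tscale c (tprod m n C X)"
  unfolding tprod_def tscale_def by (intro ext) (simp add: algebra_simps sum_distrib_left)

lemma tprod_scale_right: "tprod m n C (tscale c X) = tscale c (tprod m n C X)"
  unfolding tprod_def tscale_def by (intro ext) (simp add: algebra_simps sum_distrib_left)

lemma tprod_cong_right: "(\<And>r q. r < m \<Longrightarrow> q < n \<Longrightarrow> X r j q = Y r j q) \<Longrightarrow> tprod m n C X i j p = tprod m n C Y i j p"
  unfolding tprod_def by (intro sum.cong refl) auto

lemma tprod_ident: "i < m \<Longrightarrow> p < n \<Longrightarrow> tprod m n tident E i j p = E i j p"
proof -
  assume a: "i < m" "p < n"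
  have "tprod m n tident E i j p = (\<Sum>q<n. if (p + n - q) mod n = 0 then E i j q else 0)"
    unfolding tprod_def tident_def using a
    by (intro sum.cong refl) (simp add: if_distrib[of "\<lambda>x. x * _"] if_distrib[of "\<lambda>x. _ * x"] cong: if_cong)
  also have "\<dots> = (\<Sum>q<n. if q = p then E i j q else 0)"
  proof (intro sum.cong refl)
    fix q assume q: "q \<in> {..<n}"
    have "((p + n - q) mod n = 0) = (q = p)"
    proof
      assume h: "(p + n - q) mod n = 0"
      show "q = p"
      proof (cases "q \<le> p")
        case True
        then have "p + n - q = (p - q) + n" by simp
        then have "(p - q) mod n = 0" using h by simp
        then show ?thesis using True a by simp
      next
        case False
        then have "p + n - q < n" "0 < p + n - q" using q by auto
        then show ?thesis using h by simp
      qed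
    qed simp
    then show "(if (p + n - q) mod n = 0 then E i j q else 0) = (if q = p then E i j q else 0)" by simp
  qed
  also have "\<dots> = E i j p" using a by simp
  finally show ?thesis .
qed


lemma frob_mono: "(\<And>i j k. i < d1 \<Longrightarrow> j < d2 \<Longrightarrow> k < d3 \<Longrightarrow> \<bar>S i j k\<bar> \<le> \<bar>T i j k\<bar>) \<Longrightarrow> frob d1 d2 d3 S \<le> frob d1 d2 d3 T"
  unfolding frob_def
  by (intro real_sqrt_le_mono sum_mono) (metis abs_ge_zero power2_abs power_mono lessThan_iff)

lemma frob_sq: "(frob d1 d2 d3 T)\<^sup>2 = (\<Sum>i<d1. \<Sum>j<d2. \<Sum>k<d3. (T i j k)\<^sup>2)"
  unfolding frob_def by (intro real_sqrt_pow2 sum_nonneg) auto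

lemma frob_cols: "(frob p d n T)\<^sup>2 = (\<Sum>j<d. (frob p 1 n (\<lambda>i _ k. T i j k))\<^sup>2)"
  unfolding frob_sq by (simp add: sum.swap[of _ "{..<d}"])

lemma frob_zero_entries: "frob d1 d2 d3 T = 0 \<Longrightarrow> i < d1 \<Longrightarrow> j < d2 \<Longrightarrow> k < d3 \<Longrightarrow> T i j k = 0"
  using entry_le_frob[of i d1 j d2 k d3 T] by simp

lemma tprod_bound: "frob m 1 n X = 1 \<Longrightarrow> frob p 1 n (tprod m n C X) \<le> (\<Sum>q<n. \<Sum>r<m. frob p 1 n (\<lambda>i j k. C i r ((k+n-q) mod n)))"
proof -
  assume X: "frob m 1 n X = 1"
  have "frob p 1 n (tprod m n C X) = frob p 1 n (\<lambda>i j k. \<Sum>q<n. (\<Sum>r<m. C i r ((k+n-q) mod n) * X r j q))"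
    unfolding tprod_def by simp
  also have "\<dots> \<le> (\<Sum>q<n. frob p 1 n (\<lambda>i j k. \<Sum>r<m. C i r ((k+n-q) mod n) * X r j q))"
    by (rule frob_sum) simp
  also have "\<dots> \<le> (\<Sum>q<n. \<Sum>r<m. frob p 1 n (\<lambda>i j k. C i r ((k+n-q) mod n) * X r j q))"
    by (intro sum_mono frob_sum) simp
  also have "\<dots> \<le> (\<Sum>q<n. \<Sum>r<m. frob p 1 n (\<lambda>i j k. C i r ((k+n-q) mod n)))"
  proof (intro sum_mono frob_mono)
    fix q r i j k assume q: "q \<in> {..<n}" and r: "r \<in> {..<m}" and j: "(j::nat) < 1"
    have "\<bar>X r j q\<bar> \<le> 1" using entry_le_frob[of r m j 1 q n X] X q r j by simp
    then show "\<bar>C i r ((k + n - q) mod n) * X r j q\<bar> \<le> \<bar>C i r ((k + n - q) mod n)\<bar>"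
      by (simp add: abs_mult mult_left_le)
  qed
  finally show ?thesis .
qed

lemma topnorm_bdd: "bdd_above {frob p 1 n (tprod m n C X) | X. frob m 1 n X = 1}"
  unfolding bdd_above_def using tprod_bound by blast


lemma unit_exists: "m \<ge> 1 \<Longrightarrow> n \<ge> 1 \<Longrightarrow> frob m 1 n (\<lambda>r j q. if r = 0 \<and> q = 0 then 1 else 0) = 1"
proof -
  assume a: "m \<ge> 1" "n \<ge> 1"
  have "(\<Sum>i<m. \<Sum>j<1::nat. \<Sum>k<n. (if i = 0 \<and> k = 0 then 1 else 0 :: real)\<^sup>2) = (\<Sum>i<m. if i = 0 then 1 else 0)"
    using a by (intro sum.cong refl) (auto simp: power2_eq_square if_distrib[of "\<lambda>x. x * _"] cong: if_cong)
  also have "\<dots> = 1" using a by simp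
  finally show ?thesis unfolding frob_def by simp
qed

lemma topnorm_nonneg: "m \<ge> 1 \<Longrightarrow> n \<ge> 1 \<Longrightarrow> 0 \<le> topnorm p m n C"
proof -
  assume a: "m \<ge> 1" "n \<ge> 1"
  let ?X = "\<lambda>r j q. if r = 0 \<and> q = 0 then 1 else 0 :: real"
  have "frob p 1 n (tprod m n C ?X) \<in> {frob p 1 n (tprod m n C X) | X. frob m 1 n X = 1}"
    using unit_exists[OF a] by blast
  then have "frob p 1 n (tprod m n C ?X) \<le> topnorm p m n C"
    unfolding topnorm_def by (rule cSup_upper[OF _ topnorm_bdd])
  then show ?thesis using frob_nonneg order_trans by blast
qed


lemma opb1: "frob p 1 n (tprod m n C X) \<le> topnorm p m n C * frob m 1 n X"
proof (cases "frob m 1 n X = 0")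
  case True
  have "frob p 1 n (tprod m n C X) = frob p 1 n tzero"
  proof (rule frob_cong)
    fix i j k :: nat assume "i < p" "j < 1" "k < n"
    have "tprod m n C X i j k = tprod m n C tzero i j k"
      by (rule tprod_cong_right) (use True frob_zero_entries \<open>j < 1\<close> in \<open>auto simp: tzero_def\<close>)
    then show "tprod m n C X i j k = tzero i j k" by (simp add: tprod_def tzero_def)
  qed
  then show ?thesis using True by (simp add: frob_def tzero_def)
next
  case False
  let ?f = "frob m 1 n X"
  have fpos: "?f > 0" using False frob_nonneg[of m 1 n X] by simp
  have "frob m 1 n (tscale (1 / ?f) X) = 1"
    unfolding tscale_def frob_scale using fpos by simp
  then have "frob p 1 n (tprod m n C (tscale (1 / ?f) X)) \<in> {frob p 1 n (tprod m n C X) | X. frob m 1 n X = 1}"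
    by blast
  then have "frob p 1 n (tprod m n C (tscale (1 / ?f) X)) \<le> topnorm p m n C"
    unfolding topnorm_def by (rule cSup_upper[OF _ topnorm_bdd])
  moreover have "frob p 1 n (tprod m n C (tscale (1 / ?f) X)) = frob p 1 n (tprod m n C X) / ?f"
    unfolding tprod_scale_right unfolding tscale_def frob_scale using fpos by simp
  ultimately show ?thesis using fpos by (simp add: divide_le_eq mult.commute)
qed

lemma opb: "m \<ge> 1 \<Longrightarrow> n \<ge> 1 \<Longrightarrow> frob p d n (tprod m n C E) \<le> topnorm p m n C * frob m d n E"
proof -
  assume a: "m \<ge> 1" "n \<ge> 1"
  let ?op = "topnorm p m n C"
  have op0: "0 \<le> ?op" using topnorm_nonneg[OF a] .
  have col: "frob p 1 n (\<lambda>i _ k. tprod m n C E i j k) = frob p 1 n (tprod m n C (\<lambda>r _ q. E r j q))" for j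
    unfolding tprod_def by simp
  have "(frob p d n (tprod m n C E))\<^sup>2 = (\<Sum>j<d. (frob p 1 n (tprod m n C (\<lambda>r _ q. E r j q)))\<^sup>2)"
    by (subst frob_cols) (simp only: col)
  also have "\<dots> \<le> (\<Sum>j<d. (?op * frob m 1 n (\<lambda>r _ q. E r j q))\<^sup>2)"
    by (rule sum_mono, rule power_mono, rule opb1, rule frob_nonneg)
  also have "\<dots> = (?op * frob m d n E)\<^sup>2"
  proof -
    have "(?op * frob m d n E)\<^sup>2 = ?op\<^sup>2 * (\<Sum>j<d. (frob m 1 n (\<lambda>r _ q. E r j q))\<^sup>2)"
      by (subst frob_cols[of m d n E, symmetric]) (rule power_mult_distrib)
    then show ?thesis by (simp only: power_mult_distrib sum_distrib_left)
  qed
  finally have "(frob p d n (tprod m n C E))\<^sup>2 \<le> (?op * frob m d n E)\<^sup>2" .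
  then show ?thesis by (rule power2_le_imp_le[OF _ mult_nonneg_nonneg[OF op0 frob_nonneg]])
qed


lemma seq_decay:
  fixes e :: "int \<Rightarrow> real" and \<kappa> \<beta> c :: real and n :: nat
  assumes n: "n \<ge> 1" and k0: "\<kappa> \<ge> 0" and b0: "\<beta> \<ge> 0" and lt: "\<kappa> + \<beta> * real (n - 1) < 1"
    and nonneg: "\<And>t. e t \<ge> 0"
    and init: "\<And>t. t \<le> 0 \<Longrightarrow> e t \<le> c"
    and rec: "\<And>t. t \<ge> 0 \<Longrightarrow> e (t + 1) \<le> \<kappa> * e t + \<beta> * (\<Sum>l\<in>{1..<n}. e (t - int l))"
  shows "(\<lambda>k::nat. e (int k)) \<longlonglongrightarrow> 0"
proof -
  define \<rho> where "\<rho> = max (\<kappa> + \<beta> * real (n - 1)) (1/2)"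
  have \<rho>: "0 < \<rho>" "\<rho> < 1" "\<kappa> + \<beta> * real (n - 1) \<le> \<rho>" using lt unfolding \<rho>_def by auto
  define \<gamma> where "\<gamma> = root n \<rho>"
  have \<gamma>: "0 < \<gamma>" "\<gamma> < 1" "\<gamma> ^ n = \<rho>" using \<rho> n unfolding \<gamma>_def
    by (auto simp: real_root_lt_1_iff real_root_pow_pos2)
  have c0: "0 \<le> c" using init[of 0] nonneg[of 0] by simp
  have pd: "\<gamma> ^ a \<le> \<gamma> ^ b" if "b \<le> a" for a b
    using \<gamma> that by (intro power_decreasing) auto
  have claim: "\<forall>s. s \<le> int k \<longrightarrow> e s \<le> c * \<gamma> ^ nat s" for k :: nat
  proof (induction k)
    case 0
    then show ?case using init by auto
  next
    case (Suc k)
    show ?case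
    proof (intro allI impI)
      fix s assume s: "s \<le> int (Suc k)"
      show "e s \<le> c * \<gamma> ^ nat s"
      proof (cases "s \<le> int k")
        case True
        then show ?thesis using Suc.IH by blast
      next
        case False
        then have s': "s = int k + 1" using s by simp
        define N where "N = nat (int k + 1 - int n)"
        have Nk: "N \<le> k" unfolding N_def using n by linarith
        have Nl: "N \<le> nat (int k - int l)" if "l \<in> {1..<n}" for l unfolding N_def using that by (intro nat_mono) auto
        have Ns: "nat s \<le> N + n" unfolding N_def using s' by linarith
        have "e s \<le> \<kappa> * e (int k) + \<beta> * (\<Sum>l\<in>{1..<n}. e (int k - int l))"
          using rec[of "int k"] s' by simp
        also have "\<dots> \<le> \<kappa> * (c * \<gamma> ^ N) + \<beta> * (\<Sum>l\<in>{1..<n}. c * \<gamma> ^ N)"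
        proof (intro add_mono mult_left_mono sum_mono k0 b0)
          have "e (int k) \<le> c * \<gamma> ^ nat (int k)" using Suc.IH by blast
          also have "\<dots> \<le> c * \<gamma> ^ N" using c0 pd[OF Nk] by (intro mult_left_mono) auto
          finally show "e (int k) \<le> c * \<gamma> ^ N" .
          fix l assume l: "l \<in> {1..<n}"
          have "e (int k - int l) \<le> c * \<gamma> ^ nat (int k - int l)" using Suc.IH l by auto
          also have "\<dots> \<le> c * \<gamma> ^ N" using c0 pd[OF Nl[OF l]] by (intro mult_left_mono) auto
          finally show "e (int k - int l) \<le> c * \<gamma> ^ N" .
        qed
        also have "\<dots> = (\<kappa> + \<beta> * real (n - 1)) * (c * \<gamma> ^ N)"
          by (simp add: algebra_simps)
        also have "\<dots> \<le> \<rho> * (c * \<gamma> ^ N)"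
          using \<rho> c0 \<gamma> by (intro mult_right_mono) auto
        also have "\<dots> = c * \<gamma> ^ (N + n)"
          using \<gamma> by (simp add: power_add)
        also have "\<dots> \<le> c * \<gamma> ^ nat s"
          using c0 pd[OF Ns] by (intro mult_left_mono) auto
        finally show ?thesis .
      qed
    qed
  qed
  have bound: "e (int k) \<le> c * \<gamma> ^ k" for k :: nat
    using claim[of k] by auto
  have "(\<lambda>k. c * \<gamma> ^ k) \<longlonglongrightarrow> c * 0"
    using \<gamma> by (intro tendsto_mult tendsto_const LIMSEQ_power_zero) auto
  then have lim: "(\<lambda>k. c * \<gamma> ^ k) \<longlonglongrightarrow> 0" by simp
  show ?thesis
    by (rule tendsto_sandwich[OF _ _ tendsto_const lim]) (simp_all add: nonneg bound)
qed


lemma g_inv: "n \<ge> 1 \<Longrightarrow> l < n \<Longrightarrow> nat ((t - int (nat ((t - int l) mod int n))) mod int n) = l"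
proof -
  assume a: "n \<ge> 1" "l < n"
  have "int (nat ((t - int l) mod int n)) = (t - int l) mod int n" using a by simp
  then have "(t - int (nat ((t - int l) mod int n))) mod int n = (t - (t - int l)) mod int n"
    by (simp add: mod_diff_right_eq)
  also have "\<dots> = int l" using a by simp
  finally show ?thesis by simp
qed

lemma g_inv': "l < n \<Longrightarrow> nat ((t - (t - int l) mod int n) mod int n) = l"
proof -
  assume a: "l < n"
  have "(t - (t - int l) mod int n) mod int n = (t - (t - int l)) mod int n"
    by (simp add: mod_diff_right_eq)
  also have "\<dots> = int l" using a by simp
  finally show ?thesis by simp
qed

lemma slice_bij: "n \<ge> 1 \<Longrightarrow> bij_betw (\<lambda>l. nat ((t - int l) mod int n)) {..<n} {..<n}"
  by (rule bij_betw_byWitness[where f'="\<lambda>l. nat ((t - int l) mod int n)"])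
     (auto simp: g_inv' nat_less_iff)

lemma slice_sum: "n \<ge> 1 \<Longrightarrow> k < n \<Longrightarrow> (\<Sum>l<n. tslice A (nat ((t - int l) mod int n)) i r k) = A i r k"
proof -
  assume a: "n \<ge> 1" "k < n"
  have "(\<Sum>l<n. tslice A (nat ((t - int l) mod int n)) i r k) = (\<Sum>s<n. tslice A s i r k)"
    using sum.reindex_bij_betw[OF slice_bij[OF a(1)], of "\<lambda>s. tslice A s i r k" t] by simp
  also have "\<dots> = A i r k" using a unfolding tslice_def by simp
  finally show ?thesis .
qed

lemma tprod_sum_left: "tprod m n (\<lambda>i r k. \<Sum>l\<in>L. F l i r k) X = (\<lambda>i j p. \<Sum>l\<in>L. tprod m n (F l) X i j p)"
  unfolding tprod_def by (intro ext) (simp add: sum_distrib_right sum.swap[of _ L])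

lemma tprod_cong_left: "n \<ge> 1 \<Longrightarrow> (\<And>r k. r < m \<Longrightarrow> k < n \<Longrightarrow> C i r k = D i r k) \<Longrightarrow> tprod m n C X i j p = tprod m n D X i j p"
  unfolding tprod_def by (intro sum.cong refl) auto

lemma g0: "nat ((t - int 0) mod int n) = nat (t mod int n)" by simp

lemma g_ne: "l \<in> {1..<n} \<Longrightarrow> nat ((t - int l) mod int n) \<noteq> nat (t mod int n)"
proof
  assume l: "l \<in> {1..<n}" and h: "nat ((t - int l) mod int n) = nat (t mod int n)"
  then have n0: "n > 0" by auto
  have "(t - int l) mod int n = t mod int n" using h n0 by (simp add: eq_nat_nat_iff)
  then have "(t - (t - int l)) mod int n = (t - t) mod int n"
    by (metis mod_diff_right_eq)
  then have "int l mod int n = 0" by simp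
  then show False using l by auto
qed



theorem theorem1:
  fixes n1 n2 n3 n :: nat and A B Xs :: tensor and \<alpha> :: real
    and X :: "int \<Rightarrow> tensor"
  assumes dims: "n1 \<ge> 1" "n2 \<ge> 1" "n3 \<ge> 1" "n \<ge> 1"
    and sol: "teq n1 n3 n (tprod n2 n A Xs) B"
    and uniq: "\<And>Y. teq n1 n3 n (tprod n2 n A Y) B \<Longrightarrow> teq n2 n3 n Y Xs"
    and alpha: "\<alpha> > 0"
    and init: "\<And>t. t \<le> 0 \<Longrightarrow> X t = tzero"
    and step: "\<And>t. t \<ge> 0 \<Longrightarrow>
       X (t + 1) = tadd (X t) (tscale \<alpha> (tprod n1 n (ttrans n (tslice A (nat (t mod int n))))
          (tsub B (\<lambda>i j k. \<Sum>l<n. tprod n2 n (tslice A (nat ((t - int l) mod int n))) (X (t - int l)) i j k))))"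
    and contr: "Max {topnorm n2 n2 n (tsub tident (tscale \<alpha> (tprod n1 n (ttrans n (tslice A i)) (tslice A i)))) | i. i < n}
       + \<alpha> * Max {topnorm n2 n2 n (tprod n1 n (ttrans n (tslice A i)) (tslice A j)) | i j. i < n \<and> j < n \<and> i \<noteq> j}
         * real (n - 1) < 1"
  shows "(\<lambda>t::nat. (frob n2 n3 n (tsub (X (int t)) Xs))\<^sup>2) \<longlonglongrightarrow> 0"
proof -
  have n1: "n \<ge> 1" using dims by simp
  define kf where "kf i = topnorm n2 n2 n (tsub tident (tscale \<alpha> (tprod n1 n (ttrans n (tslice A i)) (tslice A i))))" for i
  define mf where "mf i j = topnorm n2 n2 n (tprod n1 n (ttrans n (tslice A i)) (tslice A j))" for i j
  define KS where "KS = {topnorm n2 n2 n (tsub tident (tscale \<alpha> (tprod n1 n (ttrans n (tslice A i)) (tslice A i)))) | i. i < n}"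
  define MS where "MS = {topnorm n2 n2 n (tprod n1 n (ttrans n (tslice A i)) (tslice A j)) | i j. i < n \<and> j < n \<and> i \<noteq> j}"
  define \<kappa> where "\<kappa> = Max KS"
  define \<mu> where "\<mu> = Max MS"
  have finK: "finite KS" unfolding KS_def by (rule finite_image_set) simp
  have finM: "finite MS"
  proof (rule finite_subset)
    show "MS \<subseteq> (\<lambda>(i, j). mf i j) ` ({..<n} \<times> {..<n})" unfolding MS_def mf_def by auto
  qed simp
  have kle: "kf i \<le> \<kappa>" if "i < n" for i
    unfolding \<kappa>_def by (rule Max_ge[OF finK]) (use that in \<open>auto simp: KS_def kf_def\<close>)
  have mle: "mf i j \<le> \<mu>" if "i < n" "j < n" "i \<noteq> j" for i j
    unfolding \<mu>_def by (rule Max_ge[OF finM]) (use that in \<open>auto simp: MS_def mf_def\<close>)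
  have "0 \<le> kf 0" unfolding kf_def using dims by (intro topnorm_nonneg) auto
  then have k0: "0 \<le> \<kappa>" using kle[of 0] n1 by linarith
  define \<mu>' where "\<mu>' = max \<mu> 0"
  have mle': "mf i j \<le> \<mu>'" if "i < n" "j < n" "i \<noteq> j" for i j
    using mle[OF that] unfolding \<mu>'_def by simp
  have contr': "\<kappa> + (\<alpha> * \<mu>') * real (n - 1) < 1"
  proof (cases "n = 1")
    case True
    then show ?thesis using contr unfolding \<kappa>_def KS_def by simp
  next
    case False
    then have "n \<ge> 2" using n1 by simp
    have "0 \<le> mf 0 1" unfolding mf_def using dims by (intro topnorm_nonneg) auto
    then have "0 \<le> \<mu>" using mle[of 0 1] \<open>n \<ge> 2\<close> by linarith
    then show ?thesis using contr unfolding \<kappa>_def KS_def \<mu>'_def \<mu>_def MS_def by simp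
  qed
  define E where "E t = tsub (X t) Xs" for t
  define e where "e t = frob n2 n3 n (E t)" for t
  have Bdec: "B r j q = (\<Sum>l<n. tprod n2 n (tslice A (nat ((t - int l) mod int n))) Xs r j q)"
    if "r < n1" "j < n3" "q < n" for t r j q
  proof -
    have "B r j q = tprod n2 n A Xs r j q" using sol that unfolding teq_def by simp
    also have "\<dots> = tprod n2 n (\<lambda>i r k. \<Sum>l<n. tslice A (nat ((t - int l) mod int n)) i r k) Xs r j q"
      by (rule tprod_cong_left[OF n1]) (simp add: slice_sum[OF n1])
    also have "\<dots> = (\<Sum>l<n. tprod n2 n (tslice A (nat ((t - int l) mod int n))) Xs r j q)"
      by (simp add: tprod_sum_left)
    finally show ?thesis .
  qed
  define K where "K t = tsub tident (tscale \<alpha> (tprod n1 n (ttrans n (tslice A (nat (t mod int n)))) (tslice A (nat (t mod int n)))))" for t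
  define M where "M t l = tprod n1 n (ttrans n (tslice A (nat (t mod int n)))) (tslice A (nat ((t - int l) mod int n)))" for t l
  have Dstep: "E (t + 1) i j p = tprod n2 n (K t) (E t) i j p - \<alpha> * (\<Sum>l\<in>{1..<n}. tprod n2 n (M t l) (E (t - int l)) i j p)"
    if t: "t \<ge> 0" and ijp: "i < n2" "j < n3" "p < n" for t i j p
  proof -
    let ?T = "ttrans n (tslice A (nat (t mod int n)))"
    let ?G = "\<lambda>l. tslice A (nat ((t - int l) mod int n))"
    let ?R = "tsub B (\<lambda>i j k. \<Sum>l<n. tprod n2 n (?G l) (X (t - int l)) i j k)"
    let ?F = "\<lambda>l. tprod n2 n (tprod n1 n ?T (?G l)) (E (t - int l)) i j p"
    have R_eq: "?R r j q = tscale (-1) (\<lambda>i j k. \<Sum>l<n. tprod n2 n (?G l) (E (t - int l)) i j k) r j q"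
      if "r < n1" "q < n" for r q
    proof -
      have "?R r j q = (\<Sum>l<n. tprod n2 n (?G l) Xs r j q) - (\<Sum>l<n. tprod n2 n (?G l) (X (t - int l)) r j q)"
        using Bdec[of r j q t] that ijp by (simp add: tsub_def)
      also have "\<dots> = - (\<Sum>l<n. tprod n2 n (?G l) (X (t - int l)) r j q - tprod n2 n (?G l) Xs r j q)"
        by (simp add: sum_subtractf)
      also have "\<dots> = tscale (-1) (\<lambda>i j k. \<Sum>l<n. tprod n2 n (?G l) (E (t - int l)) i j k) r j q"
        unfolding E_def tprod_sub_right by (simp add: tscale_def tsub_def)
      finally show ?thesis .
    qed
    have "tprod n1 n ?T ?R i j p = tprod n1 n ?T (tscale (-1) (\<lambda>i j k. \<Sum>l<n. tprod n2 n (?G l) (E (t - int l)) i j k)) i j p"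
      by (rule tprod_cong_right) (simp add: R_eq)
    also have "\<dots> = - (\<Sum>l<n. ?F l)"
      unfolding tprod_scale_right tprod_sum_right tprod_assoc by (simp add: tscale_def sum_negf)
    also have "\<dots> = - (?F 0 + (\<Sum>l\<in>{1..<n}. ?F l))"
      using n1 by (simp add: lessThan_atLeast0 sum.atLeast_Suc_lessThan)
    finally have TR: "tprod n1 n ?T ?R i j p = - (?F 0 + (\<Sum>l\<in>{1..<n}. ?F l))" .
    have F0: "E t i j p - \<alpha> * ?F 0 = tprod n2 n (K t) (E t) i j p"
      unfolding K_def tprod_sub_left tprod_scale_left using ijp
      by (simp add: tsub_def tscale_def tprod_ident)
    have "E (t + 1) i j p = E t i j p + \<alpha> * tprod n1 n ?T ?R i j p"
      unfolding E_def step[OF t] by (simp add: tadd_def tsub_def tscale_def)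
    also have "\<dots> = (E t i j p - \<alpha> * ?F 0) - \<alpha> * (\<Sum>l\<in>{1..<n}. ?F l)"
      unfolding TR by (simp add: algebra_simps)
    also have "\<dots> = tprod n2 n (K t) (E t) i j p - \<alpha> * (\<Sum>l\<in>{1..<n}. tprod n2 n (M t l) (E (t - int l)) i j p)"
      unfolding F0 M_def ..
    finally show ?thesis .
  qed
  have rec: "e (t + 1) \<le> \<kappa> * e t + (\<alpha> * \<mu>') * (\<Sum>l\<in>{1..<n}. e (t - int l))" if t: "t \<ge> 0" for t
  proof -
    have "e (t + 1) = frob n2 n3 n (\<lambda>i j p. tprod n2 n (K t) (E t) i j p - \<alpha> * (\<Sum>l\<in>{1..<n}. tprod n2 n (M t l) (E (t - int l)) i j p))"
      unfolding e_def by (rule frob_cong) (simp add: Dstep[OF t])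
    also have "\<dots> \<le> frob n2 n3 n (tprod n2 n (K t) (E t)) + frob n2 n3 n (\<lambda>i j p. \<alpha> * (\<Sum>l\<in>{1..<n}. tprod n2 n (M t l) (E (t - int l)) i j p))"
      by (rule frob_sub)
    also have "\<dots> = frob n2 n3 n (tprod n2 n (K t) (E t)) + \<alpha> * frob n2 n3 n (\<lambda>i j p. \<Sum>l\<in>{1..<n}. tprod n2 n (M t l) (E (t - int l)) i j p)"
      using alpha by (simp add: frob_scale)
    also have "\<dots> \<le> \<kappa> * e t + \<alpha> * (\<Sum>l\<in>{1..<n}. \<mu>' * e (t - int l))"
    proof (rule add_mono)
      have "frob n2 n3 n (tprod n2 n (K t) (E t)) \<le> topnorm n2 n2 n (K t) * e t"
        unfolding e_def using dims by (intro opb) auto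
      also have "\<dots> \<le> \<kappa> * e t"
        using kle[of "nat (t mod int n)"] n1 frob_nonneg unfolding K_def kf_def e_def
        by (intro mult_right_mono) (auto simp: nat_less_iff)
      finally show "frob n2 n3 n (tprod n2 n (K t) (E t)) \<le> \<kappa> * e t" .
      have "frob n2 n3 n (\<lambda>i j p. \<Sum>l\<in>{1..<n}. tprod n2 n (M t l) (E (t - int l)) i j p) \<le> (\<Sum>l\<in>{1..<n}. frob n2 n3 n (tprod n2 n (M t l) (E (t - int l))))"
        by (rule frob_sum) simp
      also have "\<dots> \<le> (\<Sum>l\<in>{1..<n}. \<mu>' * e (t - int l))"
      proof (rule sum_mono)
        fix l assume l: "l \<in> {1..<n}"
        have "frob n2 n3 n (tprod n2 n (M t l) (E (t - int l))) \<le> topnorm n2 n2 n (M t l) * e (t - int l)"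
          unfolding e_def using dims by (intro opb) auto
        also have "\<dots> \<le> \<mu>' * e (t - int l)"
          using mle'[of "nat (t mod int n)" "nat ((t - int l) mod int n)"] n1 frob_nonneg g_ne[OF l, of t]
          unfolding M_def mf_def e_def
          by (intro mult_right_mono) (auto simp: nat_less_iff)
        finally show "frob n2 n3 n (tprod n2 n (M t l) (E (t - int l))) \<le> \<mu>' * e (t - int l)" .
      qed
      finally show "\<alpha> * frob n2 n3 n (\<lambda>i j p. \<Sum>l\<in>{1..<n}. tprod n2 n (M t l) (E (t - int l)) i j p) \<le> \<alpha> * (\<Sum>l\<in>{1..<n}. \<mu>' * e (t - int l))"
        using alpha by simp
    qed
    also have "\<dots> = \<kappa> * e t + (\<alpha> * \<mu>') * (\<Sum>l\<in>{1..<n}. e (t - int l))"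
      by (simp add: sum_distrib_left mult.assoc)
    finally show ?thesis .
  qed
  have lim: "(\<lambda>k::nat. e (int k)) \<longlonglongrightarrow> 0"
  proof (rule seq_decay[OF n1 k0 _ contr'])
    show "0 \<le> \<alpha> * \<mu>'" using alpha unfolding \<mu>'_def by simp
    show "0 \<le> e t" for t unfolding e_def by (rule frob_nonneg)
    show "e t \<le> e 0" if "t \<le> 0" for t unfolding e_def E_def using init[OF that] init[of 0] by simp
    show "e (t + 1) \<le> \<kappa> * e t + \<alpha> * \<mu>' * (\<Sum>l\<in>{1..<n}. e (t - int l))" if "0 \<le> t" for t
      using rec[OF that] .
  qed
  have "(\<lambda>k::nat. (e (int k))\<^sup>2) \<longlonglongrightarrow> 0\<^sup>2"
    by (rule tendsto_power[OF lim])
  then show ?thesis unfolding e_def E_def by simp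
qed

end
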